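(* (i) Let $G_1=(V_1,E_1)$ and $G_2=(V_2,E_2)$ be geometric graphs in the same finite-dimensional real vector space $X$, and suppose $V_{12}=V_1\cap V_2$ contains at least two distinct vertices. Let $E_{12}$ be the set of edges of $G_1$ both of whose endpoints lie in $V_{12}$. Let $G=(V,E)$ be a geometric graph in $X$ with $V=V_1\cup V_2$ and $E\supseteq (E_1\setminus E_{12})\cup E_2$. If $G_1$ and $G_2$ are both indecomposable, then $G$ is indecomposable. (ii) Let $G_1=(V_1,E_1)$ and $G_2=(V_2,E_2)$ be indecomposable geometric graphs in the same space $X$, and suppose $V_1\cap V_2$ contains two distinct vertices $u$ and $w$. Let $G=(V,E)$ be the geometric graph with $V=V_1\cup V_2$ and $E=(E_1\setminus\{[u,w]\})\cup E_2$. Then $G$ is indecomposable.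
   Context: A geometric graph is a graph $G=(V,E)$ whose vertex set $V$ is a subset of a finite-dimensional real vector space $X$ and whose edges are line segments $[v,w]$ joining members of $V$. A function $f\colon V\to X$ is a decomposing function for $G$ if, for every edge $[v,w]\in E$, $f(v)-f(w)$ is a scalar multiple (any real scalar, possibly zero or negative) of $v-w$. The graph $G$ is indecomposable if every decomposing function is the restriction to $V$ of a map $x\mapsto \alpha x+z$ for some scalar $\alpha$ and vector $z\in X$ (this includes constant maps); otherwise $G$ is decomposable. In (ii), nothing is assumed about whether $[u,w]$ is an edge of $G_1$ or of $G_2$. *)

theory Defs
  imports "HOL-Analysis.Analysis"
begin

text \<open>A geometric graph in a finite-dimensional real vector space 'a: vertex set V and
  edge set E, where the edge (segment) [v,w] is represented by its endpoint set {v,w}.\<close>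

definition geometric_graph :: "'a::euclidean_space set \<Rightarrow> 'a set set \<Rightarrow> bool" where
  "geometric_graph V E \<longleftrightarrow> (\<forall>e\<in>E. \<exists>v w. e = {v, w} \<and> v \<noteq> w \<and> v \<in> V \<and> w \<in> V)"

definition decomposing_function :: "'a::euclidean_space set \<Rightarrow> 'a set set \<Rightarrow> ('a \<Rightarrow> 'a) \<Rightarrow> bool" where
  "decomposing_function V E f \<longleftrightarrow>
     (\<forall>v w. {v, w} \<in> E \<longrightarrow> (\<exists>c::real. f v - f w = c *\<^sub>R (v - w)))"

definition indecomposable :: "'a::euclidean_space set \<Rightarrow> 'a set set \<Rightarrow> bool" where
  "indecomposable V E \<longleftrightarrow>
     (\<forall>f. decomposing_function V E f \<longrightarrow>
        (\<exists>(\<alpha>::real) z. \<forall>x\<in>V. f x = \<alpha> *\<^sub>R x + z))"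

end

theory Submission
  imports Defs
begin

lemma glue:
  fixes V1 V2 :: "'a::euclidean_space set" and E1 E2 E :: "'a set set"
  assumes i1: "indecomposable V1 E1" and i2: "indecomposable V2 E2"
    and a: "a \<in> V1 \<inter> V2" and b: "b \<in> V1 \<inter> V2" and ab: "a \<noteq> b"
    and E2E: "E2 \<subseteq> E"
    and E1E: "\<And>e. e \<in> E1 \<Longrightarrow> e \<in> E \<or> e \<subseteq> V2"
  shows "indecomposable (V1 \<union> V2) E"
  unfolding indecomposable_def
proof (intro allI impI)
  fix f assume df: "decomposing_function (V1 \<union> V2) E f"
  have "decomposing_function V2 E2 f"
    using df E2E unfolding decomposing_function_def by blast
  then obtain \<alpha>2 z2 where f2: "\<forall>x\<in>V2. f x = \<alpha>2 *\<^sub>R x + z2"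
    using i2 unfolding indecomposable_def by blast
  have "decomposing_function V1 E1 f"
    unfolding decomposing_function_def
  proof (intro allI impI)
    fix v w assume e: "{v, w} \<in> E1"
    show "\<exists>c::real. f v - f w = c *\<^sub>R (v - w)"
    proof (cases "{v,w} \<in> E")
      case True then show ?thesis using df unfolding decomposing_function_def by blast
    next
      case False
      then have "v \<in> V2" "w \<in> V2" using E1E[OF e] by auto
      then have "f v - f w = \<alpha>2 *\<^sub>R (v - w)" using f2 by (simp add: algebra_simps)
      then show ?thesis by blast
    qed
  qed
  then obtain \<alpha>1 z1 where f1: "\<forall>x\<in>V1. f x = \<alpha>1 *\<^sub>R x + z1"
    using i1 unfolding indecomposable_def by blast
  have ea: "\<alpha>1 *\<^sub>R a + z1 = \<alpha>2 *\<^sub>R a + z2" using f1 f2 a by auto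
  have eb: "\<alpha>1 *\<^sub>R b + z1 = \<alpha>2 *\<^sub>R b + z2" using f1 f2 b by auto
  have "(\<alpha>1 - \<alpha>2) *\<^sub>R (a - b) = 0"
  proof -
    have "(\<alpha>1 - \<alpha>2) *\<^sub>R (a - b) = (\<alpha>1 *\<^sub>R a + z1) - (\<alpha>1 *\<^sub>R b + z1) - ((\<alpha>2 *\<^sub>R a + z2) - (\<alpha>2 *\<^sub>R b + z2))"
      by (simp add: algebra_simps)
    also have "\<dots> = 0" using ea eb by simp
    finally show ?thesis .
  qed
  then have al: "\<alpha>1 = \<alpha>2" using ab by simp
  then have "z1 = z2" using ea by simp
  then show "\<exists>\<alpha> z. \<forall>x\<in>V1 \<union> V2. f x = \<alpha> *\<^sub>R x + z" using al f1 f2 by blast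
qed

theorem theorem2:
  fixes V1 V2 :: "'a::euclidean_space set" and E1 E2 :: "'a set set"
  shows
  "(\<forall>V E. geometric_graph V1 E1 \<and> geometric_graph V2 E2 \<and>
      (\<exists>a b. a \<in> V1 \<inter> V2 \<and> b \<in> V1 \<inter> V2 \<and> a \<noteq> b) \<and>
      geometric_graph V E \<and> V = V1 \<union> V2 \<and>
      (E1 - {e\<in>E1. e \<subseteq> V1 \<inter> V2}) \<union> E2 \<subseteq> E \<and>
      indecomposable V1 E1 \<and> indecomposable V2 E2
      \<longrightarrow> indecomposable V E)
   \<and>
   (\<forall>u w. geometric_graph V1 E1 \<and> geometric_graph V2 E2 \<and>
      indecomposable V1 E1 \<and> indecomposable V2 E2 \<and>
      u \<in> V1 \<inter> V2 \<and> w \<in> V1 \<inter> V2 \<and> u \<noteq> w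
      \<longrightarrow> indecomposable (V1 \<union> V2) ((E1 - {{u, w}}) \<union> E2))"
proof (intro conjI allI impI)
  fix V E assume h: "geometric_graph V1 E1 \<and> geometric_graph V2 E2 \<and>
      (\<exists>a b. a \<in> V1 \<inter> V2 \<and> b \<in> V1 \<inter> V2 \<and> a \<noteq> b) \<and>
      geometric_graph V E \<and> V = V1 \<union> V2 \<and>
      (E1 - {e\<in>E1. e \<subseteq> V1 \<inter> V2}) \<union> E2 \<subseteq> E \<and>
      indecomposable V1 E1 \<and> indecomposable V2 E2"
  then obtain a b where ab: "a \<in> V1 \<inter> V2" "b \<in> V1 \<inter> V2" "a \<noteq> b" by blast
  have E2E: "E2 \<subseteq> E" using h by blast
  have E1E: "\<And>e. e \<in> E1 \<Longrightarrow> e \<in> E \<or> e \<subseteq> V2"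
  proof -
    fix e assume "e \<in> E1"
    then show "e \<in> E \<or> e \<subseteq> V2" using h by blast
  qed
  have "indecomposable (V1 \<union> V2) E"
    using glue[OF _ _ ab E2E E1E] h by blast
  then show "indecomposable V E" using h by simp
next
  fix u w assume h: "geometric_graph V1 E1 \<and> geometric_graph V2 E2 \<and>
      indecomposable V1 E1 \<and> indecomposable V2 E2 \<and>
      u \<in> V1 \<inter> V2 \<and> w \<in> V1 \<inter> V2 \<and> u \<noteq> w"
  show "indecomposable (V1 \<union> V2) ((E1 - {{u, w}}) \<union> E2)"
  proof (rule glue[of V1 E1 V2 E2 u w])
    fix e assume "e \<in> E1"
    then show "e \<in> E1 - {{u, w}} \<union> E2 \<or> e \<subseteq> V2" using h by blast
  qed (use h in blast)+
qed

end
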